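(* If $G$ is a graph that contains no induced subgraph isomorphic to $C_5$ and no induced subgraph isomorphic to the bull, and $G$ contains an anchor, then $G$ contains a homogeneous set.
   Context: All graphs are finite and simple. The bull is the graph consisting of a triangle with two disjoint pendant edges. For disjoint $A,B\subseteq V(G)$, $A$ is complete (anticomplete) to $B$ if every vertex of $A$ is adjacent (non-adjacent) to every vertex of $B$. A set $X\subseteq V(G)$ is a homogeneous set if $1<|X|<|V(G)|$ and every vertex of $V(G)\setminus X$ is either complete or anticomplete to $X$. An anchor is a six-vertex graph consisting of a 4-vertex induced path $P$, a vertex $c$ complete to $V(P)$, and a vertex $a$ anticomplete to $V(P)$ (with $a,c$ either adjacent or not). $G$ contains an anchor if some induced subgraph of $G$ is isomorphic to an anchor. *)

theory Defs
  imports Main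
begin

definition simple_graph :: "'a set \<Rightarrow> ('a \<Rightarrow> 'a \<Rightarrow> bool) \<Rightarrow> bool" where
  "simple_graph V E \<longleftrightarrow> finite V \<and> (\<forall>x\<in>V. \<forall>y\<in>V. E x y \<longleftrightarrow> E y x) \<and> (\<forall>x\<in>V. \<not> E x x)"

definition contains_induced :: "'a set \<Rightarrow> ('a \<Rightarrow> 'a \<Rightarrow> bool) \<Rightarrow> 'b set \<Rightarrow> ('b \<Rightarrow> 'b \<Rightarrow> bool) \<Rightarrow> bool" where
  "contains_induced V E W F \<longleftrightarrow>
     (\<exists>f. inj_on f W \<and> f ` W \<subseteq> V \<and> (\<forall>x\<in>W. \<forall>y\<in>W. E (f x) (f y) \<longleftrightarrow> F x y))"

definition C5_adj :: "nat \<Rightarrow> nat \<Rightarrow> bool" where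
  "C5_adj i j \<longleftrightarrow> (j = (i + 1) mod 5 \<or> i = (j + 1) mod 5)"

definition bull_adj :: "nat \<Rightarrow> nat \<Rightarrow> bool" where
  "bull_adj i j \<longleftrightarrow> {i, j} \<in> {{0,1},{1,2},{0,2},{0,3},{1,4}}"

text \<open>Anchor: induced path 0-1-2-3, vertex c = 4 complete to the path, vertex a = 5
  anticomplete to the path; a and c adjacent iff ac.\<close>
definition anchor_adj :: "bool \<Rightarrow> nat \<Rightarrow> nat \<Rightarrow> bool" where
  "anchor_adj ac i j \<longleftrightarrow>
     {i, j} \<in> {{0,1},{1,2},{2,3},{4,0},{4,1},{4,2},{4,3}} \<or> (ac \<and> {i, j} = {4,5})"

definition contains_anchor :: "'a set \<Rightarrow> ('a \<Rightarrow> 'a \<Rightarrow> bool) \<Rightarrow> bool" where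
  "contains_anchor V E \<longleftrightarrow> (\<exists>ac. contains_induced V E {0..5::nat} (anchor_adj ac))"

definition homogeneous_set :: "'a set \<Rightarrow> ('a \<Rightarrow> 'a \<Rightarrow> bool) \<Rightarrow> 'a set \<Rightarrow> bool" where
  "homogeneous_set V E X \<longleftrightarrow> X \<subseteq> V \<and> 1 < card X \<and> card X < card V \<and>
     (\<forall>v\<in>V - X. (\<forall>x\<in>X. E v x) \<or> (\<forall>x\<in>X. \<not> E v x))"

end

theory Submission
  imports Defs
begin


lemma bull_contra:
  assumes sg: "simple_graph V E" and nb: "\<not> contains_induced V E {0..4::nat} bull_adj"
  and V: "x0\<in>V" "x1\<in>V" "x2\<in>V" "x3\<in>V" "x4\<in>V"
  and e: "E x0 x1" "E x1 x2" "E x0 x2" "E x0 x3" "E x1 x4"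
  and n: "\<not>E x0 x4" "\<not>E x1 x3" "\<not>E x2 x3" "\<not>E x2 x4" "\<not>E x3 x4"
  shows False
proof -
  have sym: "\<And>x y. x\<in>V \<Longrightarrow> y\<in>V \<Longrightarrow> E x y = E y x" and irr: "\<And>x. x\<in>V \<Longrightarrow> \<not>E x x"
    using sg unfolding simple_graph_def by blast+
  have e': "E x1 x0" "E x2 x1" "E x2 x0" "E x3 x0" "E x4 x1" using e sym V by auto
  have n': "\<not>E x4 x0" "\<not>E x3 x1" "\<not>E x3 x2" "\<not>E x4 x2" "\<not>E x4 x3" using n sym V by auto
  have d: "x0\<noteq>x1" "x0\<noteq>x2" "x0\<noteq>x3" "x0\<noteq>x4" "x1\<noteq>x2" "x1\<noteq>x3" "x1\<noteq>x4" "x2\<noteq>x3" "x2\<noteq>x4" "x3\<noteq>x4"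
    using e n e' n' irr V by metis+
  define f where "f = (\<lambda>i::nat. if i=0 then x0 else if i=1 then x1 else if i=2 then x2 else if i=3 then x3 else x4)"
  have U: "{0..4::nat} = {0,1,2,3,4}" by auto
  have "contains_induced V E {0..4} bull_adj"
    unfolding contains_induced_def
  proof (intro exI conjI)
    show "inj_on f {0..4}" unfolding U inj_on_def f_def using d by auto
    show "f ` {0..4} \<subseteq> V" unfolding U f_def using V by auto
    show "\<forall>x\<in>{0..4}. \<forall>y\<in>{0..4}. E (f x) (f y) = bull_adj x y"
      unfolding U f_def bull_adj_def using e n e' n' irr V by (auto simp: doubleton_eq_iff)
  qed
  with nb show False by blast
qed

lemma c5_contra:
  assumes sg: "simple_graph V E" and nb: "\<not> contains_induced V E {0..4::nat} C5_adj"
  and V: "x0\<in>V" "x1\<in>V" "x2\<in>V" "x3\<in>V" "x4\<in>V"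
  and e: "E x0 x1" "E x1 x2" "E x2 x3" "E x3 x4" "E x4 x0"
  and n: "\<not>E x0 x2" "\<not>E x0 x3" "\<not>E x1 x3" "\<not>E x1 x4" "\<not>E x2 x4"
  shows False
proof -
  have sym: "\<And>x y. x\<in>V \<Longrightarrow> y\<in>V \<Longrightarrow> E x y = E y x" and irr: "\<And>x. x\<in>V \<Longrightarrow> \<not>E x x"
    using sg unfolding simple_graph_def by blast+
  have e': "E x1 x0" "E x2 x1" "E x3 x2" "E x4 x3" "E x0 x4" using e sym V by auto
  have n': "\<not>E x2 x0" "\<not>E x3 x0" "\<not>E x3 x1" "\<not>E x4 x1" "\<not>E x4 x2" using n sym V by auto
  have d: "x0\<noteq>x1" "x0\<noteq>x2" "x0\<noteq>x3" "x0\<noteq>x4" "x1\<noteq>x2" "x1\<noteq>x3" "x1\<noteq>x4" "x2\<noteq>x3" "x2\<noteq>x4" "x3\<noteq>x4"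
    using e n e' n' irr V by metis+
  define f where "f = (\<lambda>i::nat. if i=0 then x0 else if i=1 then x1 else if i=2 then x2 else if i=3 then x3 else x4)"
  have U: "{0..4::nat} = {0,1,2,3,4}" by auto
  have "contains_induced V E {0..4} C5_adj"
    unfolding contains_induced_def
  proof (intro exI conjI)
    show "inj_on f {0..4}" unfolding U inj_on_def f_def using d by auto
    show "f ` {0..4} \<subseteq> V" unfolding U f_def using V by auto
    show "\<forall>x\<in>{0..4}. \<forall>y\<in>{0..4}. E (f x) (f y) = C5_adj x y"
      unfolding U f_def C5_adj_def using e n e' n' irr V by auto
  qed
  with nb show False by blast
qed



locale L =
  fixes V :: "'a set" and E :: "'a \<Rightarrow> 'a \<Rightarrow> bool" and p0 p1 p2 p3 :: 'a
  assumes sg: "simple_graph V E"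
    and nb: "\<not> contains_induced V E {0..4::nat} bull_adj"
    and nc: "\<not> contains_induced V E {0..4::nat} C5_adj"
    and PV: "p0\<in>V" "p1\<in>V" "p2\<in>V" "p3\<in>V"
    and Pe: "E p0 p1" "E p1 p2" "E p2 p3" "\<not>E p0 p2" "\<not>E p0 p3" "\<not>E p1 p3"
begin

lemma Es: "x\<in>V \<Longrightarrow> y\<in>V \<Longrightarrow> E x y = E y x"
  using sg unfolding simple_graph_def by blast

lemma irr: "x\<in>V \<Longrightarrow> \<not>E x x"
  using sg unfolding simple_graph_def by blast

lemma LL1:
  assumes V: "c\<in>V" "a\<in>V" "u\<in>V"
  and ce: "E c p0" "E c p1" "E c p2" "E c p3"
  and an: "\<not>E a p0" "\<not>E a p1" "\<not>E a p2" "\<not>E a p3"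
  and ca: "E c a" and uc: "\<not>E u c"
  shows "(E u p0 \<and> E u p1 \<and> E u p2 \<and> E u p3) \<or> (\<not>E u p0 \<and> \<not>E u p1 \<and> \<not>E u p2 \<and> \<not>E u p3)"
proof -
  note F = V ce an ca uc PV Pe
  have c1: "\<not>(E u p0 \<and> \<not>E u p1 \<and> \<not>E u p2 \<and> \<not>E u p3 \<and> \<not>E u a)"
  proof
    assume "E u p0 \<and> \<not>E u p1 \<and> \<not>E u p2 \<and> \<not>E u p3 \<and> \<not>E u a"
    then have that: "E u p0" "\<not>E u p1" "\<not>E u p2" "\<not>E u p3" "\<not>E u a" by auto
    show False
      by (rule bull_contra[OF sg nb, of p0 c p1 u p3], insert that F, simp_all add: Es)
  qed
  have c2: "\<not>(E u p0 \<and> \<not>E u p1 \<and> \<not>E u p2 \<and> \<not>E u p3 \<and> E u a)"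
  proof
    assume "E u p0 \<and> \<not>E u p1 \<and> \<not>E u p2 \<and> \<not>E u p3 \<and> E u a"
    then have that: "E u p0" "\<not>E u p1" "\<not>E u p2" "\<not>E u p3" "E u a" by auto
    show False
      by (rule bull_contra[OF sg nb, of p0 c p1 u p3], insert that F, simp_all add: Es)
  qed
  have c3: "\<not>(\<not>E u p0 \<and> E u p1 \<and> \<not>E u p2 \<and> \<not>E u p3 \<and> \<not>E u a)"
  proof
    assume "\<not>E u p0 \<and> E u p1 \<and> \<not>E u p2 \<and> \<not>E u p3 \<and> \<not>E u a"
    then have that: "\<not>E u p0" "E u p1" "\<not>E u p2" "\<not>E u p3" "\<not>E u a" by auto
    show False
      by (rule bull_contra[OF sg nb, of p1 c p0 u p3], insert that F, simp_all add: Es)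
  qed
  have c4: "\<not>(\<not>E u p0 \<and> E u p1 \<and> \<not>E u p2 \<and> \<not>E u p3 \<and> E u a)"
  proof
    assume "\<not>E u p0 \<and> E u p1 \<and> \<not>E u p2 \<and> \<not>E u p3 \<and> E u a"
    then have that: "\<not>E u p0" "E u p1" "\<not>E u p2" "\<not>E u p3" "E u a" by auto
    show False
      by (rule bull_contra[OF sg nb, of p1 c p0 u p3], insert that F, simp_all add: Es)
  qed
  have c5: "\<not>(E u p0 \<and> E u p1 \<and> \<not>E u p2 \<and> \<not>E u p3 \<and> \<not>E u a)"
  proof
    assume "E u p0 \<and> E u p1 \<and> \<not>E u p2 \<and> \<not>E u p3 \<and> \<not>E u a"
    then have that: "E u p0" "E u p1" "\<not>E u p2" "\<not>E u p3" "\<not>E u a" by auto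
    show False
      by (rule bull_contra[OF sg nb, of p1 c p2 u a], insert that F, simp_all add: Es)
  qed
  have c6: "\<not>(E u p0 \<and> E u p1 \<and> \<not>E u p2 \<and> \<not>E u p3 \<and> E u a)"
  proof
    assume "E u p0 \<and> E u p1 \<and> \<not>E u p2 \<and> \<not>E u p3 \<and> E u a"
    then have that: "E u p0" "E u p1" "\<not>E u p2" "\<not>E u p3" "E u a" by auto
    show False
      by (rule bull_contra[OF sg nb, of p1 u p0 p2 a], insert that F, simp_all add: Es)
  qed
  have c7: "\<not>(\<not>E u p0 \<and> \<not>E u p1 \<and> E u p2 \<and> \<not>E u p3 \<and> \<not>E u a)"
  proof
    assume "\<not>E u p0 \<and> \<not>E u p1 \<and> E u p2 \<and> \<not>E u p3 \<and> \<not>E u a"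
    then have that: "\<not>E u p0" "\<not>E u p1" "E u p2" "\<not>E u p3" "\<not>E u a" by auto
    show False
      by (rule bull_contra[OF sg nb, of p2 c p3 u p0], insert that F, simp_all add: Es)
  qed
  have c8: "\<not>(\<not>E u p0 \<and> \<not>E u p1 \<and> E u p2 \<and> \<not>E u p3 \<and> E u a)"
  proof
    assume "\<not>E u p0 \<and> \<not>E u p1 \<and> E u p2 \<and> \<not>E u p3 \<and> E u a"
    then have that: "\<not>E u p0" "\<not>E u p1" "E u p2" "\<not>E u p3" "E u a" by auto
    show False
      by (rule bull_contra[OF sg nb, of p2 c p3 u p0], insert that F, simp_all add: Es)
  qed
  have c9: "\<not>(E u p0 \<and> \<not>E u p1 \<and> E u p2 \<and> \<not>E u p3 \<and> \<not>E u a)"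
  proof
    assume "E u p0 \<and> \<not>E u p1 \<and> E u p2 \<and> \<not>E u p3 \<and> \<not>E u a"
    then have that: "E u p0" "\<not>E u p1" "E u p2" "\<not>E u p3" "\<not>E u a" by auto
    show False
      by (rule bull_contra[OF sg nb, of p0 c p1 u p3], insert that F, simp_all add: Es)
  qed
  have c10: "\<not>(E u p0 \<and> \<not>E u p1 \<and> E u p2 \<and> \<not>E u p3 \<and> E u a)"
  proof
    assume "E u p0 \<and> \<not>E u p1 \<and> E u p2 \<and> \<not>E u p3 \<and> E u a"
    then have that: "E u p0" "\<not>E u p1" "E u p2" "\<not>E u p3" "E u a" by auto
    show False
      by (rule bull_contra[OF sg nb, of p0 c p1 u p3], insert that F, simp_all add: Es)
  qed
  have c11: "\<not>(\<not>E u p0 \<and> E u p1 \<and> E u p2 \<and> \<not>E u p3 \<and> \<not>E u a)"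
  proof
    assume "\<not>E u p0 \<and> E u p1 \<and> E u p2 \<and> \<not>E u p3 \<and> \<not>E u a"
    then have that: "\<not>E u p0" "E u p1" "E u p2" "\<not>E u p3" "\<not>E u a" by auto
    show False
      by (rule bull_contra[OF sg nb, of p1 p2 u p0 p3], insert that F, simp_all add: Es)
  qed
  have c12: "\<not>(\<not>E u p0 \<and> E u p1 \<and> E u p2 \<and> \<not>E u p3 \<and> E u a)"
  proof
    assume "\<not>E u p0 \<and> E u p1 \<and> E u p2 \<and> \<not>E u p3 \<and> E u a"
    then have that: "\<not>E u p0" "E u p1" "E u p2" "\<not>E u p3" "E u a" by auto
    show False
      by (rule bull_contra[OF sg nb, of p1 p2 u p0 p3], insert that F, simp_all add: Es)
  qed
  have c13: "\<not>(E u p0 \<and> E u p1 \<and> E u p2 \<and> \<not>E u p3 \<and> \<not>E u a)"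
  proof
    assume "E u p0 \<and> E u p1 \<and> E u p2 \<and> \<not>E u p3 \<and> \<not>E u a"
    then have that: "E u p0" "E u p1" "E u p2" "\<not>E u p3" "\<not>E u a" by auto
    show False
      by (rule bull_contra[OF sg nb, of p2 c p3 u a], insert that F, simp_all add: Es)
  qed
  have c14: "\<not>(E u p0 \<and> E u p1 \<and> E u p2 \<and> \<not>E u p3 \<and> E u a)"
  proof
    assume "E u p0 \<and> E u p1 \<and> E u p2 \<and> \<not>E u p3 \<and> E u a"
    then have that: "E u p0" "E u p1" "E u p2" "\<not>E u p3" "E u a" by auto
    show False
      by (rule bull_contra[OF sg nb, of p2 u p1 p3 a], insert that F, simp_all add: Es)
  qed
  have c15: "\<not>(\<not>E u p0 \<and> \<not>E u p1 \<and> \<not>E u p2 \<and> E u p3 \<and> \<not>E u a)"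
  proof
    assume "\<not>E u p0 \<and> \<not>E u p1 \<and> \<not>E u p2 \<and> E u p3 \<and> \<not>E u a"
    then have that: "\<not>E u p0" "\<not>E u p1" "\<not>E u p2" "E u p3" "\<not>E u a" by auto
    show False
      by (rule bull_contra[OF sg nb, of p3 c p2 u p0], insert that F, simp_all add: Es)
  qed
  have c16: "\<not>(\<not>E u p0 \<and> \<not>E u p1 \<and> \<not>E u p2 \<and> E u p3 \<and> E u a)"
  proof
    assume "\<not>E u p0 \<and> \<not>E u p1 \<and> \<not>E u p2 \<and> E u p3 \<and> E u a"
    then have that: "\<not>E u p0" "\<not>E u p1" "\<not>E u p2" "E u p3" "E u a" by auto
    show False
      by (rule bull_contra[OF sg nb, of p3 c p2 u p0], insert that F, simp_all add: Es)
  qed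
  have c17: "\<not>(E u p0 \<and> \<not>E u p1 \<and> \<not>E u p2 \<and> E u p3 \<and> \<not>E u a)"
  proof
    assume "E u p0 \<and> \<not>E u p1 \<and> \<not>E u p2 \<and> E u p3 \<and> \<not>E u a"
    then have that: "E u p0" "\<not>E u p1" "\<not>E u p2" "E u p3" "\<not>E u a" by auto
    show False
      by (rule c5_contra[OF sg nc, of p0 p1 p2 p3 u], insert that F, simp_all add: Es)
  qed
  have c18: "\<not>(E u p0 \<and> \<not>E u p1 \<and> \<not>E u p2 \<and> E u p3 \<and> E u a)"
  proof
    assume "E u p0 \<and> \<not>E u p1 \<and> \<not>E u p2 \<and> E u p3 \<and> E u a"
    then have that: "E u p0" "\<not>E u p1" "\<not>E u p2" "E u p3" "E u a" by auto
    show False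
      by (rule c5_contra[OF sg nc, of p0 p1 p2 p3 u], insert that F, simp_all add: Es)
  qed
  have c19: "\<not>(\<not>E u p0 \<and> E u p1 \<and> \<not>E u p2 \<and> E u p3 \<and> \<not>E u a)"
  proof
    assume "\<not>E u p0 \<and> E u p1 \<and> \<not>E u p2 \<and> E u p3 \<and> \<not>E u a"
    then have that: "\<not>E u p0" "E u p1" "\<not>E u p2" "E u p3" "\<not>E u a" by auto
    show False
      by (rule bull_contra[OF sg nb, of p1 c p0 u a], insert that F, simp_all add: Es)
  qed
  have c20: "\<not>(\<not>E u p0 \<and> E u p1 \<and> \<not>E u p2 \<and> E u p3 \<and> E u a)"
  proof
    assume "\<not>E u p0 \<and> E u p1 \<and> \<not>E u p2 \<and> E u p3 \<and> E u a"
    then have that: "\<not>E u p0" "E u p1" "\<not>E u p2" "E u p3" "E u a" by auto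
    show False
      by (rule bull_contra[OF sg nb, of p3 c p2 u p0], insert that F, simp_all add: Es)
  qed
  have c21: "\<not>(E u p0 \<and> E u p1 \<and> \<not>E u p2 \<and> E u p3 \<and> \<not>E u a)"
  proof
    assume "E u p0 \<and> E u p1 \<and> \<not>E u p2 \<and> E u p3 \<and> \<not>E u a"
    then have that: "E u p0" "E u p1" "\<not>E u p2" "E u p3" "\<not>E u a" by auto
    show False
      by (rule bull_contra[OF sg nb, of p1 c p2 u a], insert that F, simp_all add: Es)
  qed
  have c22: "\<not>(E u p0 \<and> E u p1 \<and> \<not>E u p2 \<and> E u p3 \<and> E u a)"
  proof
    assume "E u p0 \<and> E u p1 \<and> \<not>E u p2 \<and> E u p3 \<and> E u a"
    then have that: "E u p0" "E u p1" "\<not>E u p2" "E u p3" "E u a" by auto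
    show False
      by (rule bull_contra[OF sg nb, of p1 u p0 p2 a], insert that F, simp_all add: Es)
  qed
  have c23: "\<not>(\<not>E u p0 \<and> \<not>E u p1 \<and> E u p2 \<and> E u p3 \<and> \<not>E u a)"
  proof
    assume "\<not>E u p0 \<and> \<not>E u p1 \<and> E u p2 \<and> E u p3 \<and> \<not>E u a"
    then have that: "\<not>E u p0" "\<not>E u p1" "E u p2" "E u p3" "\<not>E u a" by auto
    show False
      by (rule bull_contra[OF sg nb, of p2 c p1 u a], insert that F, simp_all add: Es)
  qed
  have c24: "\<not>(\<not>E u p0 \<and> \<not>E u p1 \<and> E u p2 \<and> E u p3 \<and> E u a)"
  proof
    assume "\<not>E u p0 \<and> \<not>E u p1 \<and> E u p2 \<and> E u p3 \<and> E u a"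
    then have that: "\<not>E u p0" "\<not>E u p1" "E u p2" "E u p3" "E u a" by auto
    show False
      by (rule bull_contra[OF sg nb, of p2 u p3 p1 a], insert that F, simp_all add: Es)
  qed
  have c25: "\<not>(E u p0 \<and> \<not>E u p1 \<and> E u p2 \<and> E u p3 \<and> \<not>E u a)"
  proof
    assume "E u p0 \<and> \<not>E u p1 \<and> E u p2 \<and> E u p3 \<and> \<not>E u a"
    then have that: "E u p0" "\<not>E u p1" "E u p2" "E u p3" "\<not>E u a" by auto
    show False
      by (rule bull_contra[OF sg nb, of p0 c p1 u a], insert that F, simp_all add: Es)
  qed
  have c26: "\<not>(E u p0 \<and> \<not>E u p1 \<and> E u p2 \<and> E u p3 \<and> E u a)"
  proof
    assume "E u p0 \<and> \<not>E u p1 \<and> E u p2 \<and> E u p3 \<and> E u a"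
    then have that: "E u p0" "\<not>E u p1" "E u p2" "E u p3" "E u a" by auto
    show False
      by (rule bull_contra[OF sg nb, of p2 u p3 p1 a], insert that F, simp_all add: Es)
  qed
  have c27: "\<not>(\<not>E u p0 \<and> E u p1 \<and> E u p2 \<and> E u p3 \<and> \<not>E u a)"
  proof
    assume "\<not>E u p0 \<and> E u p1 \<and> E u p2 \<and> E u p3 \<and> \<not>E u a"
    then have that: "\<not>E u p0" "E u p1" "E u p2" "E u p3" "\<not>E u a" by auto
    show False
      by (rule bull_contra[OF sg nb, of p1 c p0 u a], insert that F, simp_all add: Es)
  qed
  have c28: "\<not>(\<not>E u p0 \<and> E u p1 \<and> E u p2 \<and> E u p3 \<and> E u a)"
  proof
    assume "\<not>E u p0 \<and> E u p1 \<and> E u p2 \<and> E u p3 \<and> E u a"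
    then have that: "\<not>E u p0" "E u p1" "E u p2" "E u p3" "E u a" by auto
    show False
      by (rule bull_contra[OF sg nb, of p1 u p2 p0 a], insert that F, simp_all add: Es)
  qed

  show ?thesis using c1 c2 c3 c4 c5 c6 c7 c8 c9 c10 c11 c12 c13 c14 c15 c16 c17 c18 c19 c20 c21 c22 c23 c24 c25 c26 c27 c28 by argo

qed

lemma LL2:
  assumes V: "c\<in>V" "a\<in>V" "u\<in>V"
  and ce: "E c p0" "E c p1" "E c p2" "E c p3"
  and an: "\<not>E a p0" "\<not>E a p1" "\<not>E a p2" "\<not>E a p3"
  and ca: "\<not>E c a" and ua: "E u a"
  shows "(E u p0 \<and> E u p1 \<and> E u p2 \<and> E u p3) \<or> (\<not>E u p0 \<and> \<not>E u p1 \<and> \<not>E u p2 \<and> \<not>E u p3)"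
proof -
  note F = V ce an ca ua PV Pe
  have c1: "\<not>(E u p0 \<and> \<not>E u p1 \<and> \<not>E u p2 \<and> \<not>E u p3 \<and> \<not>E u c)"
  proof
    assume "E u p0 \<and> \<not>E u p1 \<and> \<not>E u p2 \<and> \<not>E u p3 \<and> \<not>E u c"
    then have that: "E u p0" "\<not>E u p1" "\<not>E u p2" "\<not>E u p3" "\<not>E u c" by auto
    show False
      by (rule bull_contra[OF sg nb, of p0 c p1 u p3], insert that F, simp_all add: Es)
  qed
  have c2: "\<not>(E u p0 \<and> \<not>E u p1 \<and> \<not>E u p2 \<and> \<not>E u p3 \<and> E u c)"
  proof
    assume "E u p0 \<and> \<not>E u p1 \<and> \<not>E u p2 \<and> \<not>E u p3 \<and> E u c"
    then have that: "E u p0" "\<not>E u p1" "\<not>E u p2" "\<not>E u p3" "E u c" by auto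
    show False
      by (rule bull_contra[OF sg nb, of c u p0 p2 a], insert that F, simp_all add: Es)
  qed
  have c3: "\<not>(\<not>E u p0 \<and> E u p1 \<and> \<not>E u p2 \<and> \<not>E u p3 \<and> \<not>E u c)"
  proof
    assume "\<not>E u p0 \<and> E u p1 \<and> \<not>E u p2 \<and> \<not>E u p3 \<and> \<not>E u c"
    then have that: "\<not>E u p0" "E u p1" "\<not>E u p2" "\<not>E u p3" "\<not>E u c" by auto
    show False
      by (rule bull_contra[OF sg nb, of p1 c p0 u p3], insert that F, simp_all add: Es)
  qed
  have c4: "\<not>(\<not>E u p0 \<and> E u p1 \<and> \<not>E u p2 \<and> \<not>E u p3 \<and> E u c)"
  proof
    assume "\<not>E u p0 \<and> E u p1 \<and> \<not>E u p2 \<and> \<not>E u p3 \<and> E u c"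
    then have that: "\<not>E u p0" "E u p1" "\<not>E u p2" "\<not>E u p3" "E u c" by auto
    show False
      by (rule bull_contra[OF sg nb, of c u p1 p3 a], insert that F, simp_all add: Es)
  qed
  have c5: "\<not>(E u p0 \<and> E u p1 \<and> \<not>E u p2 \<and> \<not>E u p3 \<and> \<not>E u c)"
  proof
    assume "E u p0 \<and> E u p1 \<and> \<not>E u p2 \<and> \<not>E u p3 \<and> \<not>E u c"
    then have that: "E u p0" "E u p1" "\<not>E u p2" "\<not>E u p3" "\<not>E u c" by auto
    show False
      by (rule bull_contra[OF sg nb, of p1 u p0 p2 a], insert that F, simp_all add: Es)
  qed
  have c6: "\<not>(E u p0 \<and> E u p1 \<and> \<not>E u p2 \<and> \<not>E u p3 \<and> E u c)"
  proof
    assume "E u p0 \<and> E u p1 \<and> \<not>E u p2 \<and> \<not>E u p3 \<and> E u c"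
    then have that: "E u p0" "E u p1" "\<not>E u p2" "\<not>E u p3" "E u c" by auto
    show False
      by (rule bull_contra[OF sg nb, of p1 u p0 p2 a], insert that F, simp_all add: Es)
  qed
  have c7: "\<not>(\<not>E u p0 \<and> \<not>E u p1 \<and> E u p2 \<and> \<not>E u p3 \<and> \<not>E u c)"
  proof
    assume "\<not>E u p0 \<and> \<not>E u p1 \<and> E u p2 \<and> \<not>E u p3 \<and> \<not>E u c"
    then have that: "\<not>E u p0" "\<not>E u p1" "E u p2" "\<not>E u p3" "\<not>E u c" by auto
    show False
      by (rule bull_contra[OF sg nb, of p2 c p3 u p0], insert that F, simp_all add: Es)
  qed
  have c8: "\<not>(\<not>E u p0 \<and> \<not>E u p1 \<and> E u p2 \<and> \<not>E u p3 \<and> E u c)"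
  proof
    assume "\<not>E u p0 \<and> \<not>E u p1 \<and> E u p2 \<and> \<not>E u p3 \<and> E u c"
    then have that: "\<not>E u p0" "\<not>E u p1" "E u p2" "\<not>E u p3" "E u c" by auto
    show False
      by (rule bull_contra[OF sg nb, of c u p2 p0 a], insert that F, simp_all add: Es)
  qed
  have c9: "\<not>(E u p0 \<and> \<not>E u p1 \<and> E u p2 \<and> \<not>E u p3 \<and> \<not>E u c)"
  proof
    assume "E u p0 \<and> \<not>E u p1 \<and> E u p2 \<and> \<not>E u p3 \<and> \<not>E u c"
    then have that: "E u p0" "\<not>E u p1" "E u p2" "\<not>E u p3" "\<not>E u c" by auto
    show False
      by (rule bull_contra[OF sg nb, of p0 c p1 u p3], insert that F, simp_all add: Es)
  qed
  have c10: "\<not>(E u p0 \<and> \<not>E u p1 \<and> E u p2 \<and> \<not>E u p3 \<and> E u c)"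
  proof
    assume "E u p0 \<and> \<not>E u p1 \<and> E u p2 \<and> \<not>E u p3 \<and> E u c"
    then have that: "E u p0" "\<not>E u p1" "E u p2" "\<not>E u p3" "E u c" by auto
    show False
      by (rule bull_contra[OF sg nb, of c u p0 p3 a], insert that F, simp_all add: Es)
  qed
  have c11: "\<not>(\<not>E u p0 \<and> E u p1 \<and> E u p2 \<and> \<not>E u p3 \<and> \<not>E u c)"
  proof
    assume "\<not>E u p0 \<and> E u p1 \<and> E u p2 \<and> \<not>E u p3 \<and> \<not>E u c"
    then have that: "\<not>E u p0" "E u p1" "E u p2" "\<not>E u p3" "\<not>E u c" by auto
    show False
      by (rule bull_contra[OF sg nb, of p1 p2 u p0 p3], insert that F, simp_all add: Es)
  qed
  have c12: "\<not>(\<not>E u p0 \<and> E u p1 \<and> E u p2 \<and> \<not>E u p3 \<and> E u c)"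
  proof
    assume "\<not>E u p0 \<and> E u p1 \<and> E u p2 \<and> \<not>E u p3 \<and> E u c"
    then have that: "\<not>E u p0" "E u p1" "E u p2" "\<not>E u p3" "E u c" by auto
    show False
      by (rule bull_contra[OF sg nb, of p1 p2 u p0 p3], insert that F, simp_all add: Es)
  qed
  have c13: "\<not>(E u p0 \<and> E u p1 \<and> E u p2 \<and> \<not>E u p3 \<and> \<not>E u c)"
  proof
    assume "E u p0 \<and> E u p1 \<and> E u p2 \<and> \<not>E u p3 \<and> \<not>E u c"
    then have that: "E u p0" "E u p1" "E u p2" "\<not>E u p3" "\<not>E u c" by auto
    show False
      by (rule bull_contra[OF sg nb, of p2 u p1 p3 a], insert that F, simp_all add: Es)
  qed
  have c14: "\<not>(E u p0 \<and> E u p1 \<and> E u p2 \<and> \<not>E u p3 \<and> E u c)"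
  proof
    assume "E u p0 \<and> E u p1 \<and> E u p2 \<and> \<not>E u p3 \<and> E u c"
    then have that: "E u p0" "E u p1" "E u p2" "\<not>E u p3" "E u c" by auto
    show False
      by (rule bull_contra[OF sg nb, of c u p0 p3 a], insert that F, simp_all add: Es)
  qed
  have c15: "\<not>(\<not>E u p0 \<and> \<not>E u p1 \<and> \<not>E u p2 \<and> E u p3 \<and> \<not>E u c)"
  proof
    assume "\<not>E u p0 \<and> \<not>E u p1 \<and> \<not>E u p2 \<and> E u p3 \<and> \<not>E u c"
    then have that: "\<not>E u p0" "\<not>E u p1" "\<not>E u p2" "E u p3" "\<not>E u c" by auto
    show False
      by (rule bull_contra[OF sg nb, of p3 c p2 u p0], insert that F, simp_all add: Es)
  qed
  have c16: "\<not>(\<not>E u p0 \<and> \<not>E u p1 \<and> \<not>E u p2 \<and> E u p3 \<and> E u c)"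
  proof
    assume "\<not>E u p0 \<and> \<not>E u p1 \<and> \<not>E u p2 \<and> E u p3 \<and> E u c"
    then have that: "\<not>E u p0" "\<not>E u p1" "\<not>E u p2" "E u p3" "E u c" by auto
    show False
      by (rule bull_contra[OF sg nb, of c u p3 p0 a], insert that F, simp_all add: Es)
  qed
  have c17: "\<not>(E u p0 \<and> \<not>E u p1 \<and> \<not>E u p2 \<and> E u p3 \<and> \<not>E u c)"
  proof
    assume "E u p0 \<and> \<not>E u p1 \<and> \<not>E u p2 \<and> E u p3 \<and> \<not>E u c"
    then have that: "E u p0" "\<not>E u p1" "\<not>E u p2" "E u p3" "\<not>E u c" by auto
    show False
      by (rule c5_contra[OF sg nc, of p0 p1 p2 p3 u], insert that F, simp_all add: Es)
  qed
  have c18: "\<not>(E u p0 \<and> \<not>E u p1 \<and> \<not>E u p2 \<and> E u p3 \<and> E u c)"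
  proof
    assume "E u p0 \<and> \<not>E u p1 \<and> \<not>E u p2 \<and> E u p3 \<and> E u c"
    then have that: "E u p0" "\<not>E u p1" "\<not>E u p2" "E u p3" "E u c" by auto
    show False
      by (rule c5_contra[OF sg nc, of p0 p1 p2 p3 u], insert that F, simp_all add: Es)
  qed
  have c19: "\<not>(\<not>E u p0 \<and> E u p1 \<and> \<not>E u p2 \<and> E u p3 \<and> \<not>E u c)"
  proof
    assume "\<not>E u p0 \<and> E u p1 \<and> \<not>E u p2 \<and> E u p3 \<and> \<not>E u c"
    then have that: "\<not>E u p0" "E u p1" "\<not>E u p2" "E u p3" "\<not>E u c" by auto
    show False
      by (rule bull_contra[OF sg nb, of p3 c p2 u p0], insert that F, simp_all add: Es)
  qed
  have c20: "\<not>(\<not>E u p0 \<and> E u p1 \<and> \<not>E u p2 \<and> E u p3 \<and> E u c)"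
  proof
    assume "\<not>E u p0 \<and> E u p1 \<and> \<not>E u p2 \<and> E u p3 \<and> E u c"
    then have that: "\<not>E u p0" "E u p1" "\<not>E u p2" "E u p3" "E u c" by auto
    show False
      by (rule bull_contra[OF sg nb, of c u p3 p0 a], insert that F, simp_all add: Es)
  qed
  have c21: "\<not>(E u p0 \<and> E u p1 \<and> \<not>E u p2 \<and> E u p3 \<and> \<not>E u c)"
  proof
    assume "E u p0 \<and> E u p1 \<and> \<not>E u p2 \<and> E u p3 \<and> \<not>E u c"
    then have that: "E u p0" "E u p1" "\<not>E u p2" "E u p3" "\<not>E u c" by auto
    show False
      by (rule bull_contra[OF sg nb, of p1 u p0 p2 a], insert that F, simp_all add: Es)
  qed
  have c22: "\<not>(E u p0 \<and> E u p1 \<and> \<not>E u p2 \<and> E u p3 \<and> E u c)"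
  proof
    assume "E u p0 \<and> E u p1 \<and> \<not>E u p2 \<and> E u p3 \<and> E u c"
    then have that: "E u p0" "E u p1" "\<not>E u p2" "E u p3" "E u c" by auto
    show False
      by (rule bull_contra[OF sg nb, of p1 u p0 p2 a], insert that F, simp_all add: Es)
  qed
  have c23: "\<not>(\<not>E u p0 \<and> \<not>E u p1 \<and> E u p2 \<and> E u p3 \<and> \<not>E u c)"
  proof
    assume "\<not>E u p0 \<and> \<not>E u p1 \<and> E u p2 \<and> E u p3 \<and> \<not>E u c"
    then have that: "\<not>E u p0" "\<not>E u p1" "E u p2" "E u p3" "\<not>E u c" by auto
    show False
      by (rule bull_contra[OF sg nb, of p2 u p3 p1 a], insert that F, simp_all add: Es)
  qed
  have c24: "\<not>(\<not>E u p0 \<and> \<not>E u p1 \<and> E u p2 \<and> E u p3 \<and> E u c)"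
  proof
    assume "\<not>E u p0 \<and> \<not>E u p1 \<and> E u p2 \<and> E u p3 \<and> E u c"
    then have that: "\<not>E u p0" "\<not>E u p1" "E u p2" "E u p3" "E u c" by auto
    show False
      by (rule bull_contra[OF sg nb, of c u p2 p0 a], insert that F, simp_all add: Es)
  qed
  have c25: "\<not>(E u p0 \<and> \<not>E u p1 \<and> E u p2 \<and> E u p3 \<and> \<not>E u c)"
  proof
    assume "E u p0 \<and> \<not>E u p1 \<and> E u p2 \<and> E u p3 \<and> \<not>E u c"
    then have that: "E u p0" "\<not>E u p1" "E u p2" "E u p3" "\<not>E u c" by auto
    show False
      by (rule bull_contra[OF sg nb, of p2 u p3 p1 a], insert that F, simp_all add: Es)
  qed
  have c26: "\<not>(E u p0 \<and> \<not>E u p1 \<and> E u p2 \<and> E u p3 \<and> E u c)"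
  proof
    assume "E u p0 \<and> \<not>E u p1 \<and> E u p2 \<and> E u p3 \<and> E u c"
    then have that: "E u p0" "\<not>E u p1" "E u p2" "E u p3" "E u c" by auto
    show False
      by (rule bull_contra[OF sg nb, of p2 u p3 p1 a], insert that F, simp_all add: Es)
  qed
  have c27: "\<not>(\<not>E u p0 \<and> E u p1 \<and> E u p2 \<and> E u p3 \<and> \<not>E u c)"
  proof
    assume "\<not>E u p0 \<and> E u p1 \<and> E u p2 \<and> E u p3 \<and> \<not>E u c"
    then have that: "\<not>E u p0" "E u p1" "E u p2" "E u p3" "\<not>E u c" by auto
    show False
      by (rule bull_contra[OF sg nb, of p1 u p2 p0 a], insert that F, simp_all add: Es)
  qed
  have c28: "\<not>(\<not>E u p0 \<and> E u p1 \<and> E u p2 \<and> E u p3 \<and> E u c)"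
  proof
    assume "\<not>E u p0 \<and> E u p1 \<and> E u p2 \<and> E u p3 \<and> E u c"
    then have that: "\<not>E u p0" "E u p1" "E u p2" "E u p3" "E u c" by auto
    show False
      by (rule bull_contra[OF sg nb, of p1 u p2 p0 a], insert that F, simp_all add: Es)
  qed

  show ?thesis using c1 c2 c3 c4 c5 c6 c7 c8 c9 c10 c11 c12 c13 c14 c15 c16 c17 c18 c19 c20 c21 c22 c23 c24 c25 c26 c27 c28 by argo

qed


definition "cen x \<longleftrightarrow> x\<in>V \<and> E x p0 \<and> E x p1 \<and> E x p2 \<and> E x p3"
definition "acen x \<longleftrightarrow> x\<in>V \<and> \<not>E x p0 \<and> \<not>E x p1 \<and> \<not>E x p2 \<and> \<not>E x p3"
definition "gcen x \<longleftrightarrow> cen x \<and> (\<exists>y. acen y \<and> E x y)"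
definition "gacen y \<longleftrightarrow> acen y \<and> (\<exists>x. cen x \<and> \<not>E x y)"
definition "bad u \<longleftrightarrow> (\<exists>c. gcen c \<and> \<not>E u c) \<or> (\<exists>a. gacen a \<and> E u a)"
definition "mixed S u \<longleftrightarrow> (\<exists>x\<in>S. E u x) \<and> (\<exists>y\<in>S. \<not>E u y)"
definition "conn S \<longleftrightarrow> (\<forall>X. X \<subseteq> S \<longrightarrow> X \<noteq> {} \<longrightarrow> X \<noteq> S \<longrightarrow> (\<exists>x\<in>X. \<exists>y\<in>S-X. E x y))"
definition "aconn S \<longleftrightarrow> (\<forall>X. X \<subseteq> S \<longrightarrow> X \<noteq> {} \<longrightarrow> X \<noteq> S \<longrightarrow> (\<exists>x\<in>X. \<exists>y\<in>S-X. \<not>E x y))"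
definition "Inv S \<longleftrightarrow> S \<subseteq> V \<and> {p0,p1,p2,p3} \<subseteq> S \<and> conn S \<and> aconn S
   \<and> (\<forall>c. gcen c \<longrightarrow> (\<forall>x\<in>S. E c x))
   \<and> (\<forall>a. gacen a \<longrightarrow> a \<notin> S \<and> (\<forall>x\<in>S. \<not>E a x))
   \<and> (\<forall>u\<in>V-S. bad u \<longrightarrow> (\<forall>x\<in>S. E u x) \<or> (\<forall>x\<in>S. \<not>E u x))"

lemma conn_insert:
  assumes cn: "conn S" and SV: "S \<subseteq> V" and wV: "w\<in>V" and wS: "w\<notin>S" and x: "x\<in>S" "E w x"
  shows "conn (insert w S)"
  unfolding conn_def
proof (intro allI impI)
  fix X assume X: "X \<subseteq> insert w S" "X \<noteq> {}" "X \<noteq> insert w S"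
  show "\<exists>x\<in>X. \<exists>y\<in>insert w S - X. E x y"
  proof (cases "w \<in> X")
    case True
    show ?thesis
    proof (cases "X - {w} = {}")
      case True
      then have "X = {w}" using \<open>w\<in>X\<close> by auto
      moreover have "x \<notin> X" using \<open>X = {w}\<close> x wS by auto
      ultimately show ?thesis using x by auto
    next
      case False
      have "X - {w} \<subseteq> S" "X - {w} \<noteq> S" using X True by auto
      then obtain a b where "a \<in> X - {w}" "b \<in> S - (X - {w})" "E a b"
        using cn[unfolded conn_def, rule_format, of "X - {w}"] False by blast
      then show ?thesis using True wS by auto
    qed
  next
    case False
    then have XS: "X \<subseteq> S" using X by auto
    show ?thesis
    proof (cases "X = S")
      case True
      have "E x w" using Es[of x w] x wV SV by auto
      then show ?thesis using True x False by auto
    next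
      case False
      then obtain a b where "a \<in> X" "b \<in> S - X" "E a b" using cn[unfolded conn_def, rule_format, of X] XS X False by blast
      then show ?thesis by auto
    qed
  qed
qed

lemma aconn_insert:
  assumes cn: "aconn S" and SV: "S \<subseteq> V" and wV: "w\<in>V" and wS: "w\<notin>S" and x: "x\<in>S" "\<not>E w x"
  shows "aconn (insert w S)"
  unfolding aconn_def
proof (intro allI impI)
  fix X assume X: "X \<subseteq> insert w S" "X \<noteq> {}" "X \<noteq> insert w S"
  show "\<exists>x\<in>X. \<exists>y\<in>insert w S - X. \<not>E x y"
  proof (cases "w \<in> X")
    case True
    show ?thesis
    proof (cases "X - {w} = {}")
      case True
      then have "X = {w}" using \<open>w\<in>X\<close> by auto
      moreover have "x \<notin> X" using \<open>X = {w}\<close> x wS by auto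
      ultimately show ?thesis using x by auto
    next
      case False
      have "X - {w} \<subseteq> S" "X - {w} \<noteq> S" using X True by auto
      then obtain a b where "a \<in> X - {w}" "b \<in> S - (X - {w})" "\<not>E a b"
        using cn[unfolded aconn_def, rule_format, of "X - {w}"] False by blast
      then show ?thesis using True wS by auto
    qed
  next
    case False
    then have XS: "X \<subseteq> S" using X by auto
    show ?thesis
    proof (cases "X = S")
      case True
      have "\<not>E x w" using Es[of x w] x wV SV by auto
      then show ?thesis using True x False by auto
    next
      case False
      then obtain a b where "a \<in> X" "b \<in> S - X" "\<not>E a b" using cn[unfolded aconn_def, rule_format, of X] XS X False by blast
      then show ?thesis by auto
    qed
  qed
qed

lemma conn_edge:
  assumes cn: "conn S" and mx: "mixed S w"
  shows "\<exists>x\<in>S. \<exists>y\<in>S. E w x \<and> \<not>E w y \<and> E x y"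
proof -
  let ?X = "{x\<in>S. E w x}"
  have "?X \<subseteq> S" "?X \<noteq> {}" "?X \<noteq> S" using mx unfolding mixed_def by auto
  then obtain x y where "x \<in> ?X" "y \<in> S - ?X" "E x y" using cn[unfolded conn_def, rule_format, of ?X] by blast
  then show ?thesis by auto
qed

lemma aconn_nonedge:
  assumes cn: "aconn S" and mx: "mixed S w"
  shows "\<exists>x\<in>S. \<exists>y\<in>S. E w x \<and> \<not>E w y \<and> \<not>E x y"
proof -
  let ?X = "{x\<in>S. E w x}"
  have "?X \<subseteq> S" "?X \<noteq> {}" "?X \<noteq> S" using mx unfolding mixed_def by auto
  then obtain x y where "x \<in> ?X" "y \<in> S - ?X" "\<not>E x y" using cn[unfolded aconn_def, rule_format, of ?X] by blast
  then show ?thesis by auto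
qed

lemma Pe': "E p1 p0" "E p2 p1" "E p3 p2" "\<not>E p2 p0" "\<not>E p3 p0" "\<not>E p3 p1"
  using Pe PV Es by auto

lemma Inv_P: "Inv {p0,p1,p2,p3}"
proof -
  let ?S = "{p0,p1,p2,p3}"
  have cn: "conn ?S" unfolding conn_def
  proof (intro allI impI)
    fix X assume X: "X \<subseteq> ?S" "X \<noteq> {}" "X \<noteq> ?S"
    show "\<exists>x\<in>X. \<exists>y\<in>?S-X. E x y"
    proof (rule ccontr)
      assume "\<not> ?thesis"
      then have h: "\<And>x y. x\<in>X \<Longrightarrow> y\<in>?S \<Longrightarrow> y\<notin>X \<Longrightarrow> \<not>E x y" by blast
      have "p0\<in>X \<longleftrightarrow> p1\<in>X" "p1\<in>X \<longleftrightarrow> p2\<in>X" "p2\<in>X \<longleftrightarrow> p3\<in>X"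
        using h[of p0 p1] h[of p1 p0] h[of p1 p2] h[of p2 p1] h[of p2 p3] h[of p3 p2] Pe Pe' by blast+
      then show False using X by blast
    qed
  qed
  have acn: "aconn ?S" unfolding aconn_def
  proof (intro allI impI)
    fix X assume X: "X \<subseteq> ?S" "X \<noteq> {}" "X \<noteq> ?S"
    show "\<exists>x\<in>X. \<exists>y\<in>?S-X. \<not>E x y"
    proof (rule ccontr)
      assume "\<not> ?thesis"
      then have h: "\<And>x y. x\<in>X \<Longrightarrow> y\<in>?S \<Longrightarrow> y\<notin>X \<Longrightarrow> E x y" by blast
      have "p2\<in>X \<longleftrightarrow> p0\<in>X" "p0\<in>X \<longleftrightarrow> p3\<in>X" "p3\<in>X \<longleftrightarrow> p1\<in>X"
        using h[of p0 p2] h[of p2 p0] h[of p0 p3] h[of p3 p0] h[of p3 p1] h[of p1 p3] Pe Pe' by blast+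
      then show False using X by blast
    qed
  qed
  have g1: "\<forall>c. gcen c \<longrightarrow> (\<forall>x\<in>?S. E c x)" unfolding gcen_def cen_def by auto
  have g2: "\<forall>a. gacen a \<longrightarrow> a \<notin> ?S \<and> (\<forall>x\<in>?S. \<not>E a x)"
    unfolding gacen_def acen_def using Pe Pe' by auto
  have g3: "\<forall>u\<in>V-?S. bad u \<longrightarrow> (\<forall>x\<in>?S. E u x) \<or> (\<forall>x\<in>?S. \<not>E u x)"
  proof (intro ballI impI)
    fix u assume u: "u \<in> V - ?S" and b: "bad u"
    have "(E u p0 \<and> E u p1 \<and> E u p2 \<and> E u p3) \<or> (\<not>E u p0 \<and> \<not>E u p1 \<and> \<not>E u p2 \<and> \<not>E u p3)"
      using b unfolding bad_def
    proof (elim disjE exE conjE)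
      fix c assume gc: "gcen c" and uc: "\<not>E u c"
      then obtain a where "acen a" "E c a" unfolding gcen_def by blast
      then show ?thesis using LL1[of c a u] gc uc u unfolding gcen_def cen_def acen_def by blast
    next
      fix a assume ga: "gacen a" and ua: "E u a"
      then obtain c where "cen c" "\<not>E c a" unfolding gacen_def by blast
      then show ?thesis using LL2[of c a u] ga ua u unfolding gacen_def cen_def acen_def by blast
    qed
    then show "(\<forall>x\<in>?S. E u x) \<or> (\<forall>x\<in>?S. \<not>E u x)" by auto
  qed
  show ?thesis unfolding Inv_def using cn acn g1 g2 g3 PV by auto
qed

end

context L begin
lemma Inv_step:
  assumes I: "Inv S" and wV: "w\<in>V" and wS: "w\<notin>S" and mx: "mixed S w"
  shows "Inv (insert w S)"
proof -
  have SV: "S\<subseteq>V" and PS: "{p0,p1,p2,p3} \<subseteq> S" and cn: "conn S" and acn: "aconn S"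
    using I unfolding Inv_def by auto
  have G1: "\<And>c x. gcen c \<Longrightarrow> x\<in>S \<Longrightarrow> E c x" and G2: "\<And>a. gacen a \<Longrightarrow> a\<notin>S"
    and G3: "\<And>a x. gacen a \<Longrightarrow> x\<in>S \<Longrightarrow> \<not>E a x"
    and Q: "\<And>u. u\<in>V \<Longrightarrow> u\<notin>S \<Longrightarrow> bad u \<Longrightarrow> (\<forall>x\<in>S. E u x) \<or> (\<forall>x\<in>S. \<not>E u x)"
    using I unfolding Inv_def by auto
  from mx obtain x1 y1 where x1: "x1\<in>S" "E w x1" and y1: "y1\<in>S" "\<not>E w y1" unfolding mixed_def by blast
  have nbw: "\<not> bad w" using Q[OF wV wS] x1 y1 by blast
  have wc: "\<And>c. gcen c \<Longrightarrow> E w c" and wa: "\<And>a. gacen a \<Longrightarrow> \<not>E w a" using nbw unfolding bad_def by blast+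
  have cV: "\<And>c. cen c \<Longrightarrow> c\<in>V" and aV: "\<And>c. acen c \<Longrightarrow> c\<in>V" unfolding cen_def acen_def by auto
  have h1: "\<forall>c. gcen c \<longrightarrow> (\<forall>x\<in>insert w S. E c x)"
    using G1 wc Es wV gcen_def cV by blast
  have h2: "\<forall>a. gacen a \<longrightarrow> a \<notin> insert w S \<and> (\<forall>x\<in>insert w S. \<not>E a x)"
  proof (intro allI impI)
    fix a assume ga: "gacen a"
    have "a \<noteq> w" using ga G3 x1 by blast
    moreover have "\<not>E a w" using wa[OF ga] Es[of a w] wV ga aV unfolding gacen_def by auto
    ultimately show "a \<notin> insert w S \<and> (\<forall>x\<in>insert w S. \<not>E a x)" using G2 G3 ga by auto
  qed
  have h3: "\<forall>u\<in>V - insert w S. bad u \<longrightarrow> (\<forall>x\<in>insert w S. E u x) \<or> (\<forall>x\<in>insert w S. \<not>E u x)"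
  proof (intro ballI impI)
    fix u assume uV': "u \<in> V - insert w S" and bu: "bad u"
    have uV: "u\<in>V" and uw: "u\<noteq>w" and uS: "u\<notin>S" using uV' by auto
    from Q[OF uV uS bu] have cs: "(\<forall>x\<in>S. E u x) \<or> (\<forall>x\<in>S. \<not>E u x)" .
    show "(\<forall>x\<in>insert w S. E u x) \<or> (\<forall>x\<in>insert w S. \<not>E u x)"
    proof (rule ccontr)
      assume nt: "\<not> ?thesis"
      have alt: "((\<forall>x\<in>S. \<not>E u x) \<and> E u w) \<or> ((\<forall>x\<in>S. E u x) \<and> \<not>E u w)" using cs nt by auto
      have pS: "p0\<in>S" "p1\<in>S" "p2\<in>S" "p3\<in>S" using PS by auto
      from bu show False unfolding bad_def
      proof (elim disjE exE conjE)
        fix c assume gc: "gcen c" and uc: "\<not>E u c"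
        have cVV: "c\<in>V" using gc cV unfolding gcen_def by auto
        from gc obtain a where ac: "acen a" "E c a" unfolding gcen_def by blast
        have aVV: "a\<in>V" using ac aV by auto
        from alt show False
        proof
          assume al: "(\<forall>x\<in>S. \<not>E u x) \<and> E u w"
          obtain x y where xy: "x\<in>S" "y\<in>S" "E w x" "\<not>E w y" "\<not>E x y" using aconn_nonedge[OF acn mx] by blast
          have F: "w\<in>V" "c\<in>V" "x\<in>V" "u\<in>V" "y\<in>V" "E w c" "E c x" "E c y" "\<not>E u x" "\<not>E u y"
            using wV cVV xy SV uV wc[OF gc] G1[OF gc] al by auto
          show False
            by (rule bull_contra[OF sg nb, of w c x u y], insert F xy al uc, simp_all add: Es)
        next
          assume al: "(\<forall>x\<in>S. E u x) \<and> \<not>E u w"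
          have cu: "cen u" unfolding cen_def using al pS uV by auto
          have "\<not>E u a"
          proof
            assume "E u a"
            then have "gcen u" using cu ac unfolding gcen_def by blast
            then have "E w u" using wc by blast
            then show False using al Es[of w u] wV uV by auto
          qed
          then have ga: "gacen a" using ac cu unfolding gacen_def by blast
          have F: "w\<in>V" "c\<in>V" "x1\<in>V" "u\<in>V" "a\<in>V" "E w c" "E c x1" "E u x1" "\<not>E w a" "\<not>E a x1"
            using wV cVV x1 SV uV aVV wc[OF gc] G1[OF gc] al wa[OF ga] G3[OF ga] by auto
          show False
            by (rule bull_contra[OF sg nb, of c x1 w a u], insert F x1 al uc ac \<open>\<not>E u a\<close>, simp_all add: Es)
        qed
      next
        fix a assume ga: "gacen a" and ua: "E u a"
        have aVV: "a\<in>V" using ga aV unfolding gacen_def by auto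
        from ga obtain c where cc: "cen c" "\<not>E c a" unfolding gacen_def by blast
        have cVV: "c\<in>V" using cc cV by auto
        from alt show False
        proof
          assume al: "(\<forall>x\<in>S. \<not>E u x) \<and> E u w"
          have au: "acen u" unfolding acen_def using al pS uV by auto
          have "E c u"
          proof (rule ccontr)
            assume "\<not>E c u"
            then have "gacen u" using cc au unfolding gacen_def by blast
            then have "\<not>E w u" using wa by blast
            then show False using al Es[of w u] wV uV by auto
          qed
          then have gc: "gcen c" using cc au unfolding gcen_def by blast
          have F: "w\<in>V" "c\<in>V" "y1\<in>V" "u\<in>V" "a\<in>V" "E w c" "E c y1" "\<not>E u y1" "\<not>E w a" "\<not>E a y1"
            using wV cVV y1 SV uV aVV wc[OF gc] G1[OF gc] al wa[OF ga] G3[OF ga] by auto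
          show False
            by (rule bull_contra[OF sg nb, of u c w a y1], insert F y1 al ua cc \<open>E c u\<close>, simp_all add: Es)
        next
          assume al: "(\<forall>x\<in>S. E u x) \<and> \<not>E u w"
          obtain x y where xy: "x\<in>S" "y\<in>S" "E w x" "\<not>E w y" "E x y" using conn_edge[OF cn mx] by blast
          have F: "w\<in>V" "x\<in>V" "y\<in>V" "u\<in>V" "a\<in>V" "E u x" "E u y" "\<not>E a x" "\<not>E a y" "\<not>E w a"
            using wV xy SV uV aVV al G3[OF ga] wa[OF ga] by auto
          show False
            by (rule bull_contra[OF sg nb, of x u y w a], insert F xy al ua, simp_all add: Es)
        qed
      qed
    qed
  qed
  show ?thesis unfolding Inv_def
    using SV wV PS conn_insert[OF cn SV wV wS x1] aconn_insert[OF acn SV wV wS y1] h1 h2 h3 by auto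
qed

end


theorem theorem1p4:
  fixes V :: "'a set" and E :: "'a \<Rightarrow> 'a \<Rightarrow> bool"
  assumes "simple_graph V E"
    and "\<not> contains_induced V E {0..4::nat} C5_adj"
    and "\<not> contains_induced V E {0..4::nat} bull_adj"
    and "contains_anchor V E"
  shows "\<exists>X. homogeneous_set V E X"
proof -
  obtain ac f where inj: "inj_on f {0..5::nat}" and fV: "f ` {0..5} \<subseteq> V"
    and fa: "\<forall>x\<in>{0..5}. \<forall>y\<in>{0..5}. E (f x) (f y) = anchor_adj ac x y"
    using assms(4) unfolding contains_anchor_def contains_induced_def by blast
  have adj: "\<And>x y. x \<le> 5 \<Longrightarrow> y \<le> 5 \<Longrightarrow> E (f x) (f y) = anchor_adj ac x y" using fa by auto
  have e: "E (f 0) (f 1)" "E (f 1) (f 2)" "E (f 2) (f 3)" "\<not>E (f 0) (f 2)" "\<not>E (f 0) (f 3)" "\<not>E (f 1) (f 3)"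
    "E (f 4) (f 0)" "E (f 4) (f 1)" "E (f 4) (f 2)" "E (f 4) (f 3)"
    "\<not>E (f 5) (f 0)" "\<not>E (f 5) (f 1)" "\<not>E (f 5) (f 2)" "\<not>E (f 5) (f 3)"
    by (simp_all add: adj anchor_adj_def doubleton_eq_iff)
  have V: "\<And>i. i \<le> 5 \<Longrightarrow> f i \<in> V" using fV by auto
  have finV: "finite V" using assms(1) unfolding simple_graph_def by blast
  interpret L V E "f 0" "f 1" "f 2" "f 3"
    by unfold_locales (use assms e V in auto)
  define SS where "SS = {S. Inv S}"
  have sub: "SS \<subseteq> Pow V" unfolding SS_def Inv_def by auto
  have fin: "finite SS" using finite_subset[OF sub] finV by auto
  have ne: "{f 0, f 1, f 2, f 3} \<in> SS" unfolding SS_def using Inv_P by auto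
  define m where "m = Max (card ` SS)"
  have "m \<in> card ` SS" unfolding m_def using fin ne by (intro Max_in) auto
  then obtain H where HS: "H \<in> SS" and Hm: "card H = m" by auto
  have Hmax: "\<And>S. S \<in> SS \<Longrightarrow> card S \<le> card H" unfolding Hm m_def using fin by auto
  have IH: "Inv H" using HS unfolding SS_def by auto
  have HV: "H \<subseteq> V" and PH: "{f 0, f 1, f 2, f 3} \<subseteq> H" using IH unfolding Inv_def by auto
  have finH: "finite H" using finite_subset[OF HV finV] .
  have d: "f 0 \<noteq> f 1" "f 0 \<noteq> f 2" "f 0 \<noteq> f 3" "f 1 \<noteq> f 2" "f 1 \<noteq> f 3" "f 2 \<noteq> f 3"
    using inj_onD[OF inj, of 0 1] inj_onD[OF inj, of 0 2] inj_onD[OF inj, of 0 3]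
      inj_onD[OF inj, of 1 2] inj_onD[OF inj, of 1 3] inj_onD[OF inj, of 2 3] by auto
  have c4: "card {f 0, f 1, f 2, f 3} = 4" using d by simp
  have c1: "1 < card H" using card_mono[OF finH PH] c4 by simp
  have cen4: "cen (f 4)" unfolding cen_def using e V by auto
  have acen5: "acen (f 5)" unfolding acen_def using e V by auto
  obtain z where z: "z \<in> V" "z \<notin> H"
  proof (cases "E (f 4) (f 5)")
    case True
    then have "gcen (f 4)" unfolding gcen_def using cen4 acen5 by blast
    then have "\<forall>x\<in>H. E (f 4) x" using IH unfolding Inv_def by blast
    then have "f 4 \<notin> H" using irr V by auto
    then show ?thesis using that[of "f 4"] V[of 4] by simp
  next
    case False
    then have "gacen (f 5)" unfolding gacen_def using cen4 acen5 by blast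
    then have "f 5 \<notin> H" using IH unfolding Inv_def by blast
    then show ?thesis using that[of "f 5"] V[of 5] by simp
  qed
  have c2: "card H < card V" using psubset_card_mono[OF finV] HV z by blast
  have hom: "\<forall>v\<in>V - H. (\<forall>x\<in>H. E v x) \<or> (\<forall>x\<in>H. \<not> E v x)"
  proof
    fix v assume v: "v \<in> V - H"
    show "(\<forall>x\<in>H. E v x) \<or> (\<forall>x\<in>H. \<not> E v x)"
    proof (rule ccontr)
      assume "\<not> ?thesis"
      then have "mixed H v" unfolding mixed_def by blast
      then have "Inv (insert v H)" using Inv_step[OF IH] v by blast
      then have "card (insert v H) \<le> card H" using Hmax unfolding SS_def by blast
      then show False using v finH by simp
    qed
  qed
  show ?thesis unfolding homogeneous_set_def using HV c1 c2 hom by blast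
qed

end
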